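(* Let $f$, strategies $\sigma_k$ and half-lines $w^{(k)}$ be produced by Algorithm 1 (as described in the context). Then for every iteration $k$ for which $\sigma_{k+1}$ is defined, $\chi(f^{(\sigma_{k+1})})\le\chi(f^{(\sigma_k)})$.
   Context: Setting: $f:\mathbb{R}^n\to\mathbb{R}^n$ with $f_i(x)=\min_{a\in A_i}f^a_i(x)$, where each $A_i$ is finite and each $f^a_i:\mathbb{R}^n\to\mathbb{R}$ is polyhedral (piecewise affine on finitely many polyhedra covering $\mathbb{R}^n$), order-preserving ($x\le y\Rightarrow f^a_i(x)\le f^a_i(y)$), additively homogeneous ($f^a_i(\lambda+x)=\lambda+f^a_i(x)$) and convex. A strategy is a map $\sigma$ with $\sigma(i)\in A_i$ for each $i\in[n]$; $f^{(\sigma)}$ is the map with coordinates $f^{(\sigma)}_i=f^{\sigma(i)}_i$. For a polyhedral order-preserving additively homogeneous $g$, the cycle time $\chi(g)=\lim_k g^k(x)/k$ exists. A half-line is $w:t\mapsto t\eta+v$ considered for $t$ large (germ at infinity); it is invariant under $g$ if $g(w(t))=w(t+1)$ for all $t$ large, super-invariant if $g(w(t))\le w(t+1)$ for all $t$ large; every such $g$ has an invariant half-line, whose slope equals $\chi(g)$. Half-lines are compared coordinatewise for $t$ large. For polyhedral convex order-preserving additively homogeneous $g$ with $\eta=\chi(g)$: $\hat g(\eta)=\lim_t g(t\eta)/t$, $\hat g^{\eta}(v)=\lim_t(g(t\eta+v)-t\hat g(\eta))$, $\bar g=\hat g^{\eta}-\eta$; for a super-invariant half-line $w:t\mapsto t\eta+v$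 of $g$ with $\eta=\chi(g)$, $Q_g(w)$ denotes the half-line $t\mapsto t\eta+\lim_k\bar g^k(v)$, which is the unique invariant half-line of $g$ agreeing with $w$ on the critical nodes of $g$. Algorithm 1: (1) $k=0$; choose a strategy $\sigma_0$ and an invariant half-line $w^{(0)}:t\mapsto t\eta^{(0)}+v^{(0)}$ of $f^{(\sigma_0)}$. (2) If $f(w^{(k)}(t))=w^{(k)}(t+1)$ for $t$ large, stop, returning $w^{(k)}$ and $\sigma_k$. (3) Otherwise choose $\sigma_{k+1}$ with $f(w^{(k)}(t))=f^{(\sigma_{k+1})}(w^{(k)}(t))$ for $t$ large, conservatively: for each $i$, $\sigma_{k+1}(i)=\sigma_k(i)$ whenever $f_i(w^{(k)}(t))=f^{(\sigma_k)}_i(w^{(k)}(t))$ for $t$ large. (4) Compute any invariant half-line $t\mapsto t\eta^{(k+1)}+v'$ of $f^{(\sigma_{k+1})}$; if $\eta^{(k+1)}\neq\eta^{(k)}$ set $w^{(k+1)}:t\mapsto t\eta^{(k+1)}+v'$ and go to (6). (5) Otherwise (degenerate iteration) set $w^{(k+1)}=Q_{f^{(\sigma_{k+1})}}(w^{(k)})$. (6) Increase $k$ by one and go to (2). *)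

theory Defs
  imports "HOL-Analysis.Analysis"
begin

text \<open>Vectors of R^n are represented as real^'n for a finite index type 'n;
  the order on real^'n is the coordinatewise order of the library.\<close>

definition polyhedral_fun :: "(real^'n \<Rightarrow> real) \<Rightarrow> bool" where
  "polyhedral_fun g \<longleftrightarrow>
     (\<exists>P. finite P \<and> (\<forall>S\<in>P. polyhedron S) \<and> \<Union>P = UNIV \<and>
          (\<forall>S\<in>P. \<exists>a b. \<forall>x\<in>S. g x = a \<bullet> x + b))"

definition order_preserving_fun :: "(real^'n \<Rightarrow> real) \<Rightarrow> bool" where
  "order_preserving_fun g \<longleftrightarrow> (\<forall>x y. x \<le> y \<longrightarrow> g x \<le> g y)"

definition add_homogeneous_fun :: "(real^'n \<Rightarrow> real) \<Rightarrow> bool" where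
  "add_homogeneous_fun g \<longleftrightarrow> (\<forall>c x. g (vec c + x) = c + g x)"

definition minmap :: "('n \<Rightarrow> 'a \<Rightarrow> (real^'n \<Rightarrow> real)) \<Rightarrow> ('n \<Rightarrow> 'a set) \<Rightarrow> real^'n \<Rightarrow> real^'n" where
  "minmap F A x = (\<chi> i. Min ((\<lambda>a. F i a x) ` A i))"

definition is_strategy :: "('n \<Rightarrow> 'a set) \<Rightarrow> ('n \<Rightarrow> 'a) \<Rightarrow> bool" where
  "is_strategy A \<sigma> \<longleftrightarrow> (\<forall>i. \<sigma> i \<in> A i)"

definition strat_map :: "('n \<Rightarrow> 'a \<Rightarrow> (real^'n \<Rightarrow> real)) \<Rightarrow> ('n \<Rightarrow> 'a) \<Rightarrow> real^'n \<Rightarrow> real^'n" where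
  "strat_map F \<sigma> x = (\<chi> i. F i (\<sigma> i) x)"

definition cycle_time :: "(real^'n \<Rightarrow> real^'n) \<Rightarrow> real^'n" where
  "cycle_time g = lim (\<lambda>k. (1 / real k) *\<^sub>R (g ^^ k) 0)"

definition half_line :: "(real^'n) \<times> (real^'n) \<Rightarrow> real \<Rightarrow> real^'n" where
  "half_line w t = t *\<^sub>R fst w + snd w"

definition invariant_hl :: "(real^'n \<Rightarrow> real^'n) \<Rightarrow> (real^'n) \<times> (real^'n) \<Rightarrow> bool" where
  "invariant_hl g w \<longleftrightarrow> (\<forall>\<^sub>F t in at_top. g (half_line w t) = half_line w (t + 1))"

definition super_invariant_hl :: "(real^'n \<Rightarrow> real^'n) \<Rightarrow> (real^'n) \<times> (real^'n) \<Rightarrow> bool" where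
  "super_invariant_hl g w \<longleftrightarrow> (\<forall>\<^sub>F t in at_top. g (half_line w t) \<le> half_line w (t + 1))"

definition hat_map :: "(real^'n \<Rightarrow> real^'n) \<Rightarrow> real^'n \<Rightarrow> real^'n" where
  "hat_map g \<eta> = Lim at_top (\<lambda>t::real. (1 / t) *\<^sub>R g (t *\<^sub>R \<eta>))"

definition hat_map_at :: "(real^'n \<Rightarrow> real^'n) \<Rightarrow> real^'n \<Rightarrow> real^'n \<Rightarrow> real^'n" where
  "hat_map_at g \<eta> v = Lim at_top (\<lambda>t::real. g (t *\<^sub>R \<eta> + v) - t *\<^sub>R hat_map g \<eta>)"

definition bar_map :: "(real^'n \<Rightarrow> real^'n) \<Rightarrow> real^'n \<Rightarrow> real^'n \<Rightarrow> real^'n" where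
  "bar_map g \<eta> v = hat_map_at g \<eta> v - \<eta>"

definition Q_hl :: "(real^'n \<Rightarrow> real^'n) \<Rightarrow> (real^'n) \<times> (real^'n) \<Rightarrow> (real^'n) \<times> (real^'n)" where
  "Q_hl g w = (fst w, lim (\<lambda>k. (bar_map g (fst w) ^^ k) (snd w)))"

definition alg1_init where
  "alg1_init F A \<sigma>0 w0 \<longleftrightarrow> is_strategy A \<sigma>0 \<and> invariant_hl (strat_map F \<sigma>0) w0"

text \<open>Steps (2)--(5) of Algorithm 1 going from (sigma_k, w^(k)) to (sigma_(k+1), w^(k+1)):
  the stopping test fails, sigma_(k+1) is chosen conservatively as in (3), and
  w^(k+1) is obtained as in (4)/(5).\<close>
definition alg1_step where
  "alg1_step F A \<sigma> w \<sigma>' w' \<longleftrightarrow>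
     \<not> (\<forall>\<^sub>F t in at_top. minmap F A (half_line w t) = half_line w (t + 1)) \<and>
     is_strategy A \<sigma>' \<and>
     (\<forall>\<^sub>F t in at_top. minmap F A (half_line w t) = strat_map F \<sigma>' (half_line w t)) \<and>
     (\<forall>i. (\<forall>\<^sub>F t in at_top. minmap F A (half_line w t) $ i = strat_map F \<sigma> (half_line w t) $ i)
            \<longrightarrow> \<sigma>' i = \<sigma> i) \<and>
     (\<exists>\<eta>' v'. invariant_hl (strat_map F \<sigma>') (\<eta>', v') \<and>
        (if \<eta>' \<noteq> fst w then w' = (\<eta>', v') else w' = Q_hl (strat_map F \<sigma>') w))"

definition alg1_run where
  "alg1_run F A \<sigma> w N \<longleftrightarrow> alg1_init F A (\<sigma> 0) (w 0) \<and>
     (\<forall>k<N. alg1_step F A (\<sigma> k) (w k) (\<sigma> (Suc k)) (w (Suc k)))"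

end

theory Submission
  imports Defs
begin

lemma ray_affine:
  assumes "polyhedral_fun \<phi>"
  shows "\<exists>a b T. \<forall>t\<ge>T. \<phi> (t *\<^sub>R \<eta> + v) = a * t + b"
proof -
  obtain P where P: "finite P" "\<forall>S\<in>P. polyhedron S" "\<Union>P = UNIV"
     "\<forall>S\<in>P. \<exists>a b. \<forall>x\<in>S. \<phi> x = a \<bullet> x + b"
    using assms unfolding polyhedral_fun_def by blast
  define I where "I S = {t::real. t *\<^sub>R \<eta> + v \<in> S}" for S
  have cvxI: "convex (I S)" if "S \<in> P" for S
  proof -
    have cS: "convex S" using P(2) that polyhedron_imp_convex by blast
    show ?thesis unfolding convex_def I_def
    proof (intro allI impI ballI, simp)
      fix x y u w :: real assume xy: "x *\<^sub>R \<eta> + v \<in> S" "y *\<^sub>R \<eta> + v \<in> S"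
        and uw: "0 \<le> u" "0 \<le> w" "u + w = 1"
      have "(u * x + w * y) *\<^sub>R \<eta> + v = (u * x + w * y) *\<^sub>R \<eta> + (u + w) *\<^sub>R v"
        using uw(3) by simp
      also have "\<dots> = u *\<^sub>R (x *\<^sub>R \<eta> + v) + w *\<^sub>R (y *\<^sub>R \<eta> + v)"
        by (simp add: algebra_simps)
      finally have "(u * x + w * y) *\<^sub>R \<eta> + v = u *\<^sub>R (x *\<^sub>R \<eta> + v) + w *\<^sub>R (y *\<^sub>R \<eta> + v)" .
      then show "(u * x + w * y) *\<^sub>R \<eta> + v \<in> S"
        using convexD[OF cS xy uw] by simp
    qed
  qed
  have "\<exists>S\<in>P. \<not> bdd_above (I S)"
  proof (rule ccontr)
    assume "\<not> ?thesis"
    then have "\<forall>S\<in>P. \<exists>M. \<forall>t\<in>I S. t \<le> M" by (auto simp: bdd_above_def)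
    then obtain M where M: "\<And>S t. S \<in> P \<Longrightarrow> t \<in> I S \<Longrightarrow> t \<le> M S" by metis
    define B where "B = (\<Sum>S\<in>P. \<bar>M S\<bar>) + 1"
    have "B *\<^sub>R \<eta> + v \<in> \<Union>P" using P(3) by auto
    then obtain S where S: "S \<in> P" "B \<in> I S" unfolding I_def by auto
    have "\<bar>M S\<bar> \<le> (\<Sum>S\<in>P. \<bar>M S\<bar>)" using P(1) S(1) by (intro member_le_sum) auto
    then show False using M[OF S] unfolding B_def by linarith
  qed
  then obtain S where S: "S \<in> P" "\<not> bdd_above (I S)" by (elim bexE)
  then obtain t0 where t0: "t0 \<in> I S" unfolding bdd_above_def by fastforce
  have sub: "t \<in> I S" if "t \<ge> t0" for t
  proof -
    obtain t1 where t1: "t1 \<in> I S" "t < t1" using S(2) unfolding bdd_above_def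
      by (meson linorder_not_le)
    show ?thesis
    proof (cases "t = t0")
      case True then show ?thesis using t0 by simp
    next
      case False
      then have lt: "t0 < t" using that by simp
      define u where "u = (t1 - t) / (t1 - t0)"
      have u01: "0 \<le> u" "0 \<le> 1 - u" using lt t1 by (auto simp: u_def field_simps)
      have "u * (t1 - t0) = t1 - t" using lt t1 unfolding u_def by simp
      then have "u * t0 + (1 - u) * t1 = t" by (simp add: algebra_simps)
      then show ?thesis using convexD[OF cvxI[OF S(1)] t0 t1(1) u01] by simp
    qed
  qed
  obtain a b where ab: "\<forall>x\<in>S. \<phi> x = a \<bullet> x + b" using P(4) S(1) by blast
  have "\<forall>t\<ge>t0. \<phi> (t *\<^sub>R \<eta> + v) = (a \<bullet> \<eta>) * t + (a \<bullet> v + b)"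
  proof (intro allI impI)
    fix t assume "t \<ge> t0"
    then have "t *\<^sub>R \<eta> + v \<in> S" using sub unfolding I_def by auto
    then show "\<phi> (t *\<^sub>R \<eta> + v) = (a \<bullet> \<eta>) * t + (a \<bullet> v + b)"
      using ab by (simp add: inner_add_right)
  qed
  then show ?thesis by blast
qed


lemma lim_aff: "((\<lambda>m::nat. (1 / real m) * ((T + real m) * e + c)) \<longlonglongrightarrow> e)"
proof -
  have "((\<lambda>m::nat. e + (T*e+c) * inverse (real m)) \<longlongrightarrow> e + (T*e+c)*0) sequentially"
    by (intro tendsto_intros lim_inverse_n)
  then have "((\<lambda>m::nat. e + (T*e+c) * inverse (real m)) \<longlongrightarrow> e) sequentially" by simp
  then show ?thesis
    by (rule Lim_transform_eventually[OF _ eventually_mono[OF eventually_gt_at_top[of 0]]])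
      (auto simp: field_simps)
qed

lemma lin_bnd:
  fixes a b d T :: real
  assumes "\<And>t. t \<ge> T \<Longrightarrow> \<bar>t * a + b\<bar> \<le> d"
  shows "a = 0"
proof (rule ccontr)
  assume a: "a \<noteq> 0"
  define t where "t = max T ((\<bar>b\<bar> + \<bar>d\<bar> + 1) / \<bar>a\<bar>)"
  have t1: "t \<ge> (\<bar>b\<bar> + \<bar>d\<bar> + 1) / \<bar>a\<bar>" unfolding t_def by simp
  have "t * \<bar>a\<bar> \<ge> \<bar>b\<bar> + \<bar>d\<bar> + 1"
    using t1 a by (simp add: divide_le_eq)
  moreover have "t \<ge> 0" using t1 a
    by (meson abs_ge_zero add_nonneg_nonneg divide_nonneg_nonneg order_trans zero_le_one)
  ultimately have "\<bar>t * a\<bar> \<ge> \<bar>b\<bar> + \<bar>d\<bar> + 1" by (simp add: abs_mult)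
  moreover have "t \<ge> T" unfolding t_def by simp
  then have "\<bar>t * a + b\<bar> \<le> d" using assms by blast
  ultimately show False by linarith
qed

locale tmap =
  fixes g :: "real^'n::finite \<Rightarrow> real^'n"
  assumes gmono: "\<And>x y. x \<le> y \<Longrightarrow> g x \<le> g y"
    and ghom: "\<And>c x. g (vec c + x) = vec c + g x"
    and gpoly: "\<And>i. polyhedral_fun (\<lambda>x. g x $ i)"
begin

lemma nonexp: "x \<le> y + vec d \<Longrightarrow> g x \<le> g y + vec d"
  using gmono[of x "vec d + y"] ghom[of d y] by (simp add: add.commute)

lemma iter_nonexp: "x \<le> y + vec d \<Longrightarrow> (g^^m) x \<le> (g^^m) y + vec d"
  by (induction m) (auto intro: nonexp)

lemma iter_mono: "x \<le> y \<Longrightarrow> (g^^m) x \<le> (g^^m) y"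
  by (induction m) (auto intro: gmono)

lemma bound_vec: "\<exists>d. (x::real^'n) \<le> (y::real^'n) + vec d \<and> y \<le> x + vec d"
proof -
  define d where "d = (\<Sum>i\<in>UNIV. \<bar>x$i - y$i\<bar>)"
  have b: "\<bar>x$i - y$i\<bar> \<le> d" for i unfolding d_def by (rule member_le_sum) auto
  have "x \<le> y + vec d \<and> y \<le> x + vec d"
    unfolding less_eq_vec_def
  proof (intro conjI allI)
    fix i show "x $ i \<le> (y + vec d) $ i" using b[of i] by simp
    show "y $ i \<le> (x + vec d) $ i" using b[of i] by simp
  qed
  then show ?thesis by blast
qed

lemma ray_vec: "\<exists>\<alpha> \<beta> T. \<forall>t\<ge>T. g (t *\<^sub>R \<eta> + v) = t *\<^sub>R \<alpha> + \<beta>"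
proof -
  have "\<forall>i. \<exists>a b T. \<forall>t\<ge>T. g (t *\<^sub>R \<eta> + v) $ i = a * t + b"
    using ray_affine[OF gpoly] by blast
  then obtain a b T where ab: "\<And>i t. t \<ge> T i \<Longrightarrow> g (t *\<^sub>R \<eta> + v) $ i = a i * t + b i"
    by metis
  define T0 where "T0 = Max (range T)"
  have T0: "T i \<le> T0" for i unfolding T0_def by (rule Max_ge) auto
  have "\<forall>t\<ge>T0. g (t *\<^sub>R \<eta> + v) = t *\<^sub>R (\<chi> i. a i) + (\<chi> i. b i)"
  proof (intro allI impI)
    fix t assume t: "t \<ge> T0"
    show "g (t *\<^sub>R \<eta> + v) = t *\<^sub>R (\<chi> i. a i) + (\<chi> i. b i)"
      unfolding vec_eq_iff
    proof
      fix i
      have "T i \<le> t" using T0[of i] t by simp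
      then show "g (t *\<^sub>R \<eta> + v) $ i = (t *\<^sub>R (\<chi> i. a i) + (\<chi> i. b i)) $ i"
        using ab[of i t] by (simp add: mult.commute)
    qed
  qed
  then show ?thesis by blast
qed

lemma slope:
  assumes inv: "invariant_hl g (\<eta>, u)"
  shows "\<exists>c. \<forall>\<^sub>F t in at_top. g (t *\<^sub>R \<eta> + v) = t *\<^sub>R \<eta> + c"
proof -
  obtain T1 where T1: "\<And>t. t \<ge> T1 \<Longrightarrow> g (t *\<^sub>R \<eta> + u) = (t+1) *\<^sub>R \<eta> + u"
    using inv by (auto simp: invariant_hl_def half_line_def eventually_at_top_linorder)
  obtain \<alpha> \<beta> T2 where T2: "\<And>t. t \<ge> T2 \<Longrightarrow> g (t *\<^sub>R \<eta> + v) = t *\<^sub>R \<alpha> + \<beta>"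
    using ray_vec by blast
  obtain d where d: "v \<le> u + vec d" "u \<le> v + vec d" using bound_vec by blast
  have eq: "\<alpha> = \<eta>"
    unfolding vec_eq_iff
  proof
    fix i
    have bnd: "\<bar>t * (\<alpha>$i - \<eta>$i) + (\<beta>$i - \<eta>$i - u$i)\<bar> \<le> d" if t: "t \<ge> max T1 T2" for t
    proof -
      have "t *\<^sub>R \<eta> + v \<le> (t *\<^sub>R \<eta> + u) + vec d" using d(1) by (simp add: less_eq_vec_def)
      from nonexp[OF this] have A: "g (t *\<^sub>R \<eta> + v) \<le> g (t *\<^sub>R \<eta> + u) + vec d" .
      have "t *\<^sub>R \<eta> + u \<le> (t *\<^sub>R \<eta> + v) + vec d" using d(2) by (simp add: less_eq_vec_def)
      from nonexp[OF this] have B: "g (t *\<^sub>R \<eta> + u) \<le> g (t *\<^sub>R \<eta> + v) + vec d" .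
      have e1: "g (t *\<^sub>R \<eta> + u) = (t+1) *\<^sub>R \<eta> + u" using T1 t by simp
      have e2: "g (t *\<^sub>R \<eta> + v) = t *\<^sub>R \<alpha> + \<beta>" using T2 t by simp
      have "t * \<alpha>$i + \<beta>$i \<le> (t+1) * \<eta>$i + u$i + d"
        using A[unfolded e1 e2] by (simp add: less_eq_vec_def)
      moreover have "(t+1) * \<eta>$i + u$i \<le> t * \<alpha>$i + \<beta>$i + d"
        using B[unfolded e1 e2] by (simp add: less_eq_vec_def)
      ultimately show ?thesis by (simp add: abs_le_iff algebra_simps)
    qed
    have "\<alpha>$i - \<eta>$i = 0" by (rule lin_bnd[OF bnd])
    then show "\<alpha>$i = \<eta>$i" by simp
  qed
  have "\<forall>\<^sub>F t in at_top. g (t *\<^sub>R \<eta> + v) = t *\<^sub>R \<eta> + \<beta>"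
    unfolding eventually_at_top_linorder using T2 eq by blast
  then show ?thesis by blast
qed


lemma iter_hl:
  assumes "\<And>t. t \<ge> T \<Longrightarrow> g (t *\<^sub>R \<eta> + u) = (t+1) *\<^sub>R \<eta> + u"
  shows "(g^^m) (T *\<^sub>R \<eta> + u) = (T + real m) *\<^sub>R \<eta> + u"
proof (induction m)
  case 0 then show ?case by simp
next
  case (Suc m)
  have "(g^^Suc m) (T *\<^sub>R \<eta> + u) = g ((T + real m) *\<^sub>R \<eta> + u)" using Suc by simp
  also have "\<dots> = (T + real m + 1) *\<^sub>R \<eta> + u" using assms[of "T + real m"] by simp
  finally show ?case by (simp add: add.assoc add.commute)
qed

lemma iter_shl:
  assumes "\<And>t. t \<ge> T \<Longrightarrow> g (t *\<^sub>R \<eta> + u) \<le> (t+1) *\<^sub>R \<eta> + u"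
  shows "(g^^m) (T *\<^sub>R \<eta> + u) \<le> (T + real m) *\<^sub>R \<eta> + u"
proof (induction m)
  case 0 then show ?case by simp
next
  case (Suc m)
  have "(g^^Suc m) (T *\<^sub>R \<eta> + u) \<le> g ((T + real m) *\<^sub>R \<eta> + u)" using Suc by (simp add: gmono)
  also have "\<dots> \<le> (T + real m + 1) *\<^sub>R \<eta> + u" using assms[of "T + real m"] by simp
  also have "\<dots> = (T + real (Suc m)) *\<^sub>R \<eta> + u" by (simp add: algebra_simps)
  finally show ?case .
qed

lemma cycle_conv:
  assumes inv: "invariant_hl g (\<eta>, u)"
  shows "(\<lambda>m. (1 / real m) *\<^sub>R (g^^m) 0) \<longlonglongrightarrow> \<eta>"
proof -
  obtain T where T: "\<And>t. t \<ge> T \<Longrightarrow> g (t *\<^sub>R \<eta> + u) = (t+1) *\<^sub>R \<eta> + u"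
    using inv by (auto simp: invariant_hl_def half_line_def eventually_at_top_linorder)
  define x0 where "x0 = T *\<^sub>R \<eta> + u"
  obtain d where d: "0 \<le> x0 + vec d" "x0 \<le> 0 + vec d" using bound_vec by blast
  have it: "(g^^m) x0 = (T + real m) *\<^sub>R \<eta> + u" for m unfolding x0_def by (rule iter_hl[OF T])
  have lo: "(g^^m) 0 \<le> (g^^m) x0 + vec d" for m by (rule iter_nonexp[OF d(1)])
  have hi: "(g^^m) x0 \<le> (g^^m) 0 + vec d" for m using iter_nonexp[OF d(2)] by simp
  show ?thesis
  proof (rule vec_tendstoI)
    fix i
    have L: "(\<lambda>m. (1/real m) * ((T + real m) * \<eta>$i + (u$i - d))) \<longlonglongrightarrow> \<eta>$i" by (rule lim_aff)
    have U: "(\<lambda>m. (1/real m) * ((T + real m) * \<eta>$i + (u$i + d))) \<longlonglongrightarrow> \<eta>$i" by (rule lim_aff)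
    show "(\<lambda>m. ((1 / real m) *\<^sub>R (g^^m) 0) $ i) \<longlonglongrightarrow> \<eta>$i"
    proof (rule tendsto_sandwich[OF _ _ L U])
      show "\<forall>\<^sub>F m in sequentially. (1/real m) * ((T + real m) * \<eta>$i + (u$i - d)) \<le> ((1 / real m) *\<^sub>R (g^^m) 0) $ i"
      proof (rule always_eventually, rule allI)
        fix m
        have "((T + real m) *\<^sub>R \<eta> + u) $ i \<le> ((g^^m) 0 + vec d) $ i"
          using hi[of m] unfolding it less_eq_vec_def by blast
        then have "(T + real m) * \<eta>$i + (u$i - d) \<le> (g^^m) 0 $ i" by simp
        then show "(1/real m) * ((T + real m) * \<eta>$i + (u$i - d)) \<le> ((1 / real m) *\<^sub>R (g^^m) 0) $ i"
          by (simp add: divide_right_mono)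
      qed
      show "\<forall>\<^sub>F m in sequentially. ((1 / real m) *\<^sub>R (g^^m) 0) $ i \<le> (1/real m) * ((T + real m) * \<eta>$i + (u$i + d))"
      proof (rule always_eventually, rule allI)
        fix m
        have "((g^^m) 0) $ i \<le> ((T + real m) *\<^sub>R \<eta> + u + vec d) $ i"
          using lo[of m] unfolding it less_eq_vec_def by blast
        then have "(g^^m) 0 $ i \<le> (T + real m) * \<eta>$i + (u$i + d)" by simp
        then show "((1 / real m) *\<^sub>R (g^^m) 0) $ i \<le> (1/real m) * ((T + real m) * \<eta>$i + (u$i + d))"
          by (simp add: divide_right_mono)
      qed
    qed
  qed
qed

lemma cycle_eq:
  assumes inv: "invariant_hl g (\<eta>, u)"
  shows "cycle_time g = \<eta>"
  unfolding cycle_time_def using cycle_conv[OF inv] by (rule limI)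

lemma cycle_le:
  assumes inv: "invariant_hl g (e, u)" and sup: "super_invariant_hl g (\<eta>, v)"
  shows "cycle_time g \<le> \<eta>"
proof -
  have ce: "cycle_time g = e" by (rule cycle_eq[OF inv])
  have conv: "(\<lambda>m. (1 / real m) *\<^sub>R (g^^m) 0) \<longlonglongrightarrow> e" by (rule cycle_conv[OF inv])
  obtain T where T: "\<And>t. t \<ge> T \<Longrightarrow> g (t *\<^sub>R \<eta> + v) \<le> (t+1) *\<^sub>R \<eta> + v"
    using sup by (auto simp: super_invariant_hl_def half_line_def eventually_at_top_linorder)
  define x0 where "x0 = T *\<^sub>R \<eta> + v"
  obtain d where d: "0 \<le> x0 + vec d" "x0 \<le> 0 + vec d" using bound_vec by blast
  have it: "(g^^m) x0 \<le> (T + real m) *\<^sub>R \<eta> + v" for m unfolding x0_def by (rule iter_shl[OF T])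
  have lo: "(g^^m) 0 \<le> (g^^m) x0 + vec d" for m by (rule iter_nonexp[OF d(1)])
  show ?thesis
    unfolding ce less_eq_vec_def
  proof
    fix i
    have C: "(\<lambda>m. ((1 / real m) *\<^sub>R (g^^m) 0) $ i) \<longlonglongrightarrow> e$i"
      using conv by (rule tendsto_vec_nth)
    have U: "(\<lambda>m. (1/real m) * ((T + real m) * \<eta>$i + (v$i + d))) \<longlonglongrightarrow> \<eta>$i" by (rule lim_aff)
    show "e$i \<le> \<eta>$i"
    proof (rule LIMSEQ_le[OF C U], intro exI allI impI)
      fix m :: nat
      have "((g^^m) 0) $ i \<le> ((g^^m) x0 + vec d) $ i"
        using lo[of m] unfolding less_eq_vec_def by blast
      moreover have "((g^^m) x0) $ i \<le> ((T + real m) *\<^sub>R \<eta> + v) $ i"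
        using it[of m] unfolding less_eq_vec_def by blast
      ultimately have "(g^^m) 0 $ i \<le> (T + real m) * \<eta>$i + (v$i + d)" by simp
      then show "((1 / real m) *\<^sub>R (g^^m) 0) $ i \<le> (1/real m) * ((T + real m) * \<eta>$i + (v$i + d))"
        by (simp add: divide_right_mono)
    qed
  qed
qed

lemma bar_eq:
  assumes inv: "invariant_hl g (\<eta>, u)"
  shows "\<forall>\<^sub>F t in at_top. g (t *\<^sub>R \<eta> + v) = (t + 1) *\<^sub>R \<eta> + bar_map g \<eta> v"
proof -
  obtain c0 where c0: "\<forall>\<^sub>F t in at_top. g (t *\<^sub>R \<eta> + 0) = t *\<^sub>R \<eta> + c0"
    using slope[OF inv] by blast
  have hat: "hat_map g \<eta> = \<eta>"
    unfolding hat_map_def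
  proof (rule tendsto_Lim[OF trivial_limit_at_top_linorder])
    have "((\<lambda>t::real. \<eta> + inverse t *\<^sub>R c0) \<longlongrightarrow> \<eta> + 0 *\<^sub>R c0) at_top"
      by (intro tendsto_intros tendsto_inverse_0_at_top filterlim_ident)
    then have "((\<lambda>t::real. \<eta> + inverse t *\<^sub>R c0) \<longlongrightarrow> \<eta>) at_top" by simp
    moreover have "\<forall>\<^sub>F t in at_top. \<eta> + inverse t *\<^sub>R c0 = (1 / t) *\<^sub>R g (t *\<^sub>R \<eta>)"
      using c0 eventually_gt_at_top[of 0]
    proof eventually_elim
      case (elim t)
      then show ?case by (simp add: scaleR_add_right divide_inverse)
    qed
    ultimately show "((\<lambda>t. (1 / t) *\<^sub>R g (t *\<^sub>R \<eta>)) \<longlongrightarrow> \<eta>) at_top"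
      by (rule Lim_transform_eventually)
  qed
  obtain c where c: "\<forall>\<^sub>F t in at_top. g (t *\<^sub>R \<eta> + v) = t *\<^sub>R \<eta> + c"
    using slope[OF inv] by blast
  have "hat_map_at g \<eta> v = c"
    unfolding hat_map_at_def hat
  proof (rule tendsto_Lim[OF trivial_limit_at_top_linorder], rule tendsto_eventually)
    show "\<forall>\<^sub>F t in at_top. g (t *\<^sub>R \<eta> + v) - t *\<^sub>R \<eta> = c"
      using c by eventually_elim simp
  qed
  then have bm: "bar_map g \<eta> v = c - \<eta>" by (simp add: bar_map_def)
  show ?thesis using c by eventually_elim (simp add: bm algebra_simps)
qed


lemma Q_super:
  assumes inv: "invariant_hl g (\<eta>, u)" and sup: "super_invariant_hl g (\<eta>, v)"
  shows "super_invariant_hl g (Q_hl g (\<eta>, v))"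
proof -
  define B where "B = bar_map g \<eta>"
  have BE: "\<forall>\<^sub>F t in at_top. g (t *\<^sub>R \<eta> + x) = (t + 1) *\<^sub>R \<eta> + B x" for x
    unfolding B_def by (rule bar_eq[OF inv])
  have Bmono: "B x \<le> B y" if xy: "x \<le> y" for x y
  proof -
    have "\<forall>\<^sub>F t in at_top. g (t *\<^sub>R \<eta> + x) = (t + 1) *\<^sub>R \<eta> + B x \<and> g (t *\<^sub>R \<eta> + y) = (t + 1) *\<^sub>R \<eta> + B y"
      by (rule eventually_conj[OF BE[of x] BE[of y]])
    note ev = this
    obtain t where t: "g (t *\<^sub>R \<eta> + x) = (t + 1) *\<^sub>R \<eta> + B x" "g (t *\<^sub>R \<eta> + y) = (t + 1) *\<^sub>R \<eta> + B y"
      using eventually_happens[OF ev] trivial_limit_at_top_linorder by blast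
    have "g (t *\<^sub>R \<eta> + x) \<le> g (t *\<^sub>R \<eta> + y)" using xy by (intro gmono) simp
    then show ?thesis using t by simp
  qed
  have Bhom: "B (vec c + x) = vec c + B x" for c x
  proof -
    have "\<forall>\<^sub>F t in at_top. g (t *\<^sub>R \<eta> + (vec c + x)) = (t + 1) *\<^sub>R \<eta> + B (vec c + x) \<and> g (t *\<^sub>R \<eta> + x) = (t + 1) *\<^sub>R \<eta> + B x"
      by (rule eventually_conj[OF BE BE])
    note ev = this
    obtain t where t: "g (t *\<^sub>R \<eta> + (vec c + x)) = (t + 1) *\<^sub>R \<eta> + B (vec c + x)" "g (t *\<^sub>R \<eta> + x) = (t + 1) *\<^sub>R \<eta> + B x"
      using eventually_happens[OF ev] trivial_limit_at_top_linorder by blast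
    have "g (t *\<^sub>R \<eta> + (vec c + x)) = vec c + g (t *\<^sub>R \<eta> + x)"
      using ghom[of c "t *\<^sub>R \<eta> + x"] by (simp add: algebra_simps)
    then have "(t + 1) *\<^sub>R \<eta> + B (vec c + x) = (t + 1) *\<^sub>R \<eta> + (vec c + B x)"
      using t by (simp add: algebra_simps)
    then show ?thesis by simp
  qed
  have Bu: "B u = u"
  proof -
    have "\<forall>\<^sub>F t in at_top. g (t *\<^sub>R \<eta> + u) = (t + 1) *\<^sub>R \<eta> + B u \<and> g (t *\<^sub>R \<eta> + u) = (t + 1) *\<^sub>R \<eta> + u"
      using eventually_conj[OF BE[of u] inv[unfolded invariant_hl_def half_line_def]] by simp
    note ev = this
    obtain t where t: "g (t *\<^sub>R \<eta> + u) = (t + 1) *\<^sub>R \<eta> + B u" "g (t *\<^sub>R \<eta> + u) = (t + 1) *\<^sub>R \<eta> + u"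
      using eventually_happens[OF ev] trivial_limit_at_top_linorder by blast
    then show ?thesis by simp
  qed
  have Bv: "B v \<le> v"
  proof -
    have "\<forall>\<^sub>F t in at_top. g (t *\<^sub>R \<eta> + v) = (t + 1) *\<^sub>R \<eta> + B v \<and> g (t *\<^sub>R \<eta> + v) \<le> (t + 1) *\<^sub>R \<eta> + v"
      using eventually_conj[OF BE[of v] sup[unfolded super_invariant_hl_def half_line_def]] by simp
    note ev = this
    obtain t where t: "g (t *\<^sub>R \<eta> + v) = (t + 1) *\<^sub>R \<eta> + B v" "g (t *\<^sub>R \<eta> + v) \<le> (t + 1) *\<^sub>R \<eta> + v"
      using eventually_happens[OF ev] trivial_limit_at_top_linorder by blast
    then show ?thesis by simp
  qed
  define s where "s k = (B^^k) v" for k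
  have sS: "s (Suc k) = B (s k)" for k by (simp add: s_def)
  have dec: "s (Suc k) \<le> s k" for k
  proof (induction k)
    case 0 then show ?case using Bv by (simp add: s_def)
  next
    case (Suc k) then show ?case unfolding sS[of "Suc k"] sS[of k] by (rule Bmono)
  qed
  obtain d where d: "u \<le> v + vec d" using bound_vec by blast
  define lw where "lw = vec (- d) + u"
  have lwv: "lw \<le> v" using d unfolding lw_def less_eq_vec_def by (simp add: algebra_simps)
  have Blw: "B lw = lw" unfolding lw_def Bhom Bu ..
  have low: "lw \<le> s k" for k
  proof (induction k)
    case 0 then show ?case using lwv by (simp add: s_def)
  next
    case (Suc k) then show ?case unfolding sS using Bmono[OF Suc] Blw by simp
  qed
  have "\<forall>i. \<exists>L. (\<lambda>k. s k $ i) \<longlonglongrightarrow> L \<and> (\<forall>k. L \<le> s k $ i)"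
  proof
    fix i
    have "decseq (\<lambda>k. s k $ i)"
      by (rule decseq_SucI) (use dec in \<open>simp add: less_eq_vec_def\<close>)
    moreover have "\<forall>k. lw $ i \<le> s k $ i" using low by (simp add: less_eq_vec_def)
    ultimately obtain L where "(\<lambda>k. s k $ i) \<longlonglongrightarrow> L" "\<forall>k. L \<le> s k $ i"
      by (rule decseq_convergent)
    then show "\<exists>L. (\<lambda>k. s k $ i) \<longlonglongrightarrow> L \<and> (\<forall>k. L \<le> s k $ i)" by blast
  qed
  then obtain Lf where Lf: "\<And>i. (\<lambda>k. s k $ i) \<longlonglongrightarrow> Lf i" "\<And>i k. Lf i \<le> s k $ i" by metis
  define L where "L = (\<chi> i. Lf i)"
  have conv: "s \<longlonglongrightarrow> L" unfolding L_def by (rule vec_tendstoI) (simp add: Lf(1))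
  have Q: "Q_hl g (\<eta>, v) = (\<eta>, L)"
  proof -
    have "s = (\<lambda>k. (bar_map g \<eta> ^^ k) v)" by (simp add: s_def B_def fun_eq_iff)
    then show ?thesis unfolding Q_hl_def using limI[OF conv] by simp
  qed
  have Ls: "L \<le> s k" for k unfolding L_def less_eq_vec_def using Lf(2) by simp
  have BL: "B L \<le> L"
    unfolding less_eq_vec_def
  proof
    fix i
    have "B L $ i \<le> s (Suc k) $ i" for k using Bmono[OF Ls[of k]] unfolding sS less_eq_vec_def by blast
    then show "B L $ i \<le> L $ i"
      using LIMSEQ_le_const[OF LIMSEQ_Suc[OF Lf(1)[of i]], of "B L $ i"] unfolding L_def by simp
  qed
  show ?thesis unfolding Q super_invariant_hl_def half_line_def
    using BE[of L] by eventually_elim (use BL in simp)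
qed

end

lemma inv_super: "invariant_hl g w \<Longrightarrow> super_invariant_hl g w"
  unfolding invariant_hl_def super_invariant_hl_def by (auto elim: eventually_mono)

lemma tmap_strat:
  assumes st: "is_strategy A \<sigma>"
    and poly: "\<And>i a. a \<in> A i \<Longrightarrow> polyhedral_fun (F i a)"
    and mono: "\<And>i a. a \<in> A i \<Longrightarrow> order_preserving_fun (F i a)"
    and hom: "\<And>i a. a \<in> A i \<Longrightarrow> add_homogeneous_fun (F i a)"
  shows "tmap (strat_map F \<sigma>)"
proof
  have s: "\<sigma> i \<in> A i" for i using st unfolding is_strategy_def by blast
  show "strat_map F \<sigma> x \<le> strat_map F \<sigma> y" if "x \<le> y" for x y
    using mono[OF s] that unfolding less_eq_vec_def strat_map_def order_preserving_fun_def
    by simp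
  show "strat_map F \<sigma> (vec c + x) = vec c + strat_map F \<sigma> x" for c x
    using hom[OF s] unfolding vec_eq_iff strat_map_def add_homogeneous_fun_def by simp
  show "polyhedral_fun (\<lambda>x. strat_map F \<sigma> x $ i)" for i
    using poly[OF s] unfolding strat_map_def by simp
qed

lemma minmap_le:
  assumes fin: "\<And>i. finite (A i)" and st: "is_strategy A \<sigma>"
  shows "minmap F A x \<le> strat_map F \<sigma> x"
  unfolding less_eq_vec_def minmap_def strat_map_def
proof
  fix i
  have "\<sigma> i \<in> A i" using st unfolding is_strategy_def by blast
  then show "(\<chi> i. Min ((\<lambda>a. F i a x) ` A i)) $ i \<le> (\<chi> i. F i (\<sigma> i) x) $ i"
    using fin[of i] by simp
qed

lemma step_super:
  assumes fin: "\<And>i. finite (A i)" and st: "is_strategy A \<sigma>"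
    and step: "alg1_step F A \<sigma> w \<sigma>' w'"
    and sup: "super_invariant_hl (strat_map F \<sigma>) w"
  shows "super_invariant_hl (strat_map F \<sigma>') w"
proof -
  have ev: "\<forall>\<^sub>F t in at_top. minmap F A (half_line w t) = strat_map F \<sigma>' (half_line w t)"
    using step unfolding alg1_step_def by blast
  show ?thesis unfolding super_invariant_hl_def
    using ev sup[unfolded super_invariant_hl_def]
  proof eventually_elim
    case (elim t)
    then show ?case using minmap_le[OF fin st, of F "half_line w t"] by (metis order_trans)
  qed
qed

theorem lemma4p2:
  fixes F :: "'n::finite \<Rightarrow> 'a \<Rightarrow> (real^'n \<Rightarrow> real)"
    and A :: "'n \<Rightarrow> 'a set"
    and \<sigma> :: "nat \<Rightarrow> 'n \<Rightarrow> 'a"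
    and w :: "nat \<Rightarrow> (real^'n) \<times> (real^'n)"
    and N k :: nat
  assumes fin: "\<And>i. finite (A i)" and ne: "\<And>i. A i \<noteq> {}"
    and poly: "\<And>i a. a \<in> A i \<Longrightarrow> polyhedral_fun (F i a)"
    and mono: "\<And>i a. a \<in> A i \<Longrightarrow> order_preserving_fun (F i a)"
    and hom: "\<And>i a. a \<in> A i \<Longrightarrow> add_homogeneous_fun (F i a)"
    and cvx: "\<And>i a. a \<in> A i \<Longrightarrow> convex_on UNIV (F i a)"
    and run: "alg1_run F A \<sigma> w N"
    and k: "k < N"
  shows "cycle_time (strat_map F (\<sigma> (Suc k))) \<le> cycle_time (strat_map F (\<sigma> k))"
proof -
  define G where "G j = strat_map F (\<sigma> j)" for j
  have init: "alg1_init F A (\<sigma> 0) (w 0)" and steps: "\<And>j. j < N \<Longrightarrow> alg1_step F A (\<sigma> j) (w j) (\<sigma> (Suc j)) (w (Suc j))"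
    using run unfolding alg1_run_def by auto
  have P: "is_strategy A (\<sigma> j) \<and> super_invariant_hl (G j) (w j) \<and> (\<exists>u. invariant_hl (G j) (fst (w j), u))"
    if "j \<le> N" for j
    using that
  proof (induction j)
    case 0
    have "invariant_hl (G 0) (w 0)" using init unfolding alg1_init_def G_def by blast
    moreover have "w 0 = (fst (w 0), snd (w 0))" by simp
    ultimately show ?case using init inv_super unfolding alg1_init_def G_def by metis
  next
    case (Suc j)
    then have jN: "j < N" by simp
    with Suc.IH have IH: "is_strategy A (\<sigma> j)" "super_invariant_hl (G j) (w j)" by auto
    have step: "alg1_step F A (\<sigma> j) (w j) (\<sigma> (Suc j)) (w (Suc j))" by (rule steps[OF jN])
    have st': "is_strategy A (\<sigma> (Suc j))" using step unfolding alg1_step_def by blast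
    interpret tmap "G (Suc j)" unfolding G_def by (rule tmap_strat[OF st' poly mono hom])
    have sup': "super_invariant_hl (G (Suc j)) (w j)"
      unfolding G_def by (rule step_super[OF fin IH(1) step IH(2)[unfolded G_def]])
    obtain \<eta>' v' where inv': "invariant_hl (G (Suc j)) (\<eta>', v')"
      and ite: "if \<eta>' \<noteq> fst (w j) then w (Suc j) = (\<eta>', v') else w (Suc j) = Q_hl (G (Suc j)) (w j)"
      using step unfolding alg1_step_def G_def by blast
    show ?case
    proof (cases "\<eta>' \<noteq> fst (w j)")
      case True
      then have "w (Suc j) = (\<eta>', v')" using ite by simp
      then show ?thesis using st' inv' inv_super by auto
    next
      case False
      then have wS: "w (Suc j) = Q_hl (G (Suc j)) (fst (w j), snd (w j))" using ite by simp
      have sup'': "super_invariant_hl (G (Suc j)) (\<eta>', snd (w j))" using sup' False by simp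
      have "super_invariant_hl (G (Suc j)) (w (Suc j))"
        unfolding wS using False Q_super[OF inv' sup''] by simp
      moreover have "fst (w (Suc j)) = \<eta>'" unfolding wS using False by (simp add: Q_hl_def)
      ultimately show ?thesis using st' inv' by auto
    qed
  qed
  have Pk: "is_strategy A (\<sigma> k)" "super_invariant_hl (G k) (w k)" "\<exists>u. invariant_hl (G k) (fst (w k), u)"
    using P[of k] k by auto
  have PS: "\<exists>u. invariant_hl (G (Suc k)) (fst (w (Suc k)), u)" using P[of "Suc k"] k by auto
  then obtain u' where u': "invariant_hl (G (Suc k)) (fst (w (Suc k)), u')" by blast
  obtain u where u: "invariant_hl (G k) (fst (w k), u)" using Pk(3) by blast
  have stk: "is_strategy A (\<sigma> (Suc k))" using steps[OF k] unfolding alg1_step_def by blast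
  interpret Tk: tmap "G k" unfolding G_def by (rule tmap_strat[OF Pk(1) poly mono hom])
  interpret TS: tmap "G (Suc k)" unfolding G_def by (rule tmap_strat[OF stk poly mono hom])
  have sup: "super_invariant_hl (G (Suc k)) (fst (w k), snd (w k))"
    unfolding G_def using step_super[OF fin Pk(1) steps[OF k] Pk(2)[unfolded G_def]] by simp
  have "cycle_time (G (Suc k)) \<le> fst (w k)" by (rule TS.cycle_le[OF u' sup])
  moreover have "cycle_time (G k) = fst (w k)" by (rule Tk.cycle_eq[OF u])
  ultimately show ?thesis unfolding G_def by simp
qed

end
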